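(* Let $S=s_1,\ldots,s_n$ be a sequence of positive real numbers with mean $\mu=\frac1n\sum_is_i$, let $\alpha>1$, $\gamma>0$, and let $k$ be a positive integer. If $(L,\beta)$ is an optimal solution of $\textsc{Exp}(\alpha)$ for $S,\alpha,\gamma,k$, then \[ \frac{1}{\alpha^k\mu}\le\beta\le\frac1\mu. \]
   Context: A level sequence is $L=\ell_1,\ldots,\ell_n$ of integers with $0\le\ell_i\le k$; set $\ell_0=0$. The penalty is $\mathrm{pen}(x,y)=\max(y-x,0)\,\gamma\log n$; $p_{\exp}(s;\lambda)=\lambda e^{-\lambda s}$; $\mathrm{score}_{\exp}(L,S;\alpha,\beta,\gamma)=\sum_{i=1}^n\big[-\log p_{\exp}(s_i;\beta\alpha^{\ell_i})+\mathrm{pen}(\ell_{i-1},\ell_i)\big]$. Problem $\textsc{Exp}(\alpha)$: given $S,\alpha,\gamma,k$, find $L$ and $\beta>0$ minimizing this score. *)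

theory Defs
  imports Complex_Main
begin

(* Sequences are indexed 1..n: S i = s_i, L i = l_i for 1 <= i <= n; l_0 = 0. *)

definition pen :: "nat \<Rightarrow> real \<Rightarrow> int \<Rightarrow> int \<Rightarrow> real" where
  "pen n \<gamma> x y = max (real_of_int (y - x)) 0 * \<gamma> * ln (real n)"

definition p_exp :: "real \<Rightarrow> real \<Rightarrow> real" where
  "p_exp s lam = lam * exp (- lam * s)"

definition lev :: "(nat \<Rightarrow> int) \<Rightarrow> nat \<Rightarrow> int" where
  "lev L i = (if i = 0 then 0 else L i)"

definition score_exp :: "nat \<Rightarrow> (nat \<Rightarrow> int) \<Rightarrow> (nat \<Rightarrow> real) \<Rightarrow> real \<Rightarrow> real \<Rightarrow> real \<Rightarrow> real" where
  "score_exp n L S \<alpha> \<beta> \<gamma> =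
     (\<Sum>i=1..n. - ln (p_exp (S i) (\<beta> * \<alpha> powr (real_of_int (L i))))
                + pen n \<gamma> (lev L (i - 1)) (lev L i))"

definition level_seq :: "nat \<Rightarrow> nat \<Rightarrow> (nat \<Rightarrow> int) \<Rightarrow> bool" where
  "level_seq n k L \<longleftrightarrow> (\<forall>i\<in>{1..n}. 0 \<le> L i \<and> L i \<le> int k)"

definition optimal_exp :: "nat \<Rightarrow> (nat \<Rightarrow> real) \<Rightarrow> real \<Rightarrow> real \<Rightarrow> nat \<Rightarrow> (nat \<Rightarrow> int) \<Rightarrow> real \<Rightarrow> bool" where
  "optimal_exp n S \<alpha> \<gamma> k L \<beta> \<longleftrightarrow>
     level_seq n k L \<and> \<beta> > 0 \<and>
     (\<forall>L' \<beta>'. level_seq n k L' \<longrightarrow> \<beta>' > 0 \<longrightarrow>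
        score_exp n L S \<alpha> \<beta> \<gamma> \<le> score_exp n L' S \<alpha> \<beta>' \<gamma>)"

end

theory Submission imports Defs begin
lemma ln_strict:
  fixes x :: real
  assumes "x > 0" "x \<noteq> 1"
  shows "ln x < x - 1"
proof -
  have s: "sqrt x > 0" "sqrt x \<noteq> 1" using assms by auto
  have e: "ln (sqrt x * sqrt x) = ln (sqrt x) + ln (sqrt x)" using s(1) by (simp only: ln_mult) simp
  have "sqrt x * sqrt x = x" using assms by simp
  then have "ln x = 2 * ln (sqrt x)" using e by simp
  also have "\<dots> \<le> 2 * (sqrt x - 1)" using ln_le_minus_one[OF s(1)] by simp
  also have "\<dots> < x - 1"
  proof -
    have "(sqrt x - 1)^2 > 0" using s by simp
    moreover have "(sqrt x)^2 = x" using assms by simp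
    ultimately show ?thesis by (simp add: power2_eq_square algebra_simps)
  qed
  finally show ?thesis .
qed

lemma score_form:
  assumes "b > 0" "\<alpha> > 0"
  shows "score_exp n L S \<alpha> b \<gamma> =
     (\<Sum>i=1..n. - (real_of_int (L i) * ln \<alpha>) + pen n \<gamma> (lev L (i - 1)) (lev L i))
     - real n * ln b + b * (\<Sum>i=1..n. \<alpha> powr real_of_int (L i) * S i)"
proof -
  have t: "\<And>i. - ln (p_exp (S i) (b * \<alpha> powr (real_of_int (L i))))
      = - ln b - real_of_int (L i) * ln \<alpha> + b * (\<alpha> powr real_of_int (L i) * S i)"
  proof -
    fix i
    have "p_exp (S i) (b * \<alpha> powr (real_of_int (L i))) = b * \<alpha> powr (real_of_int (L i)) * exp (- (b * \<alpha> powr (real_of_int (L i))) * S i)"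
      by (simp add: p_exp_def)
    moreover have "ln (b * \<alpha> powr (real_of_int (L i)) * exp (- (b * \<alpha> powr (real_of_int (L i))) * S i))
       = ln b + ln (\<alpha> powr (real_of_int (L i))) + (- (b * \<alpha> powr (real_of_int (L i))) * S i)"
      using assms by (simp add: ln_mult)
    moreover have "ln (\<alpha> powr (real_of_int (L i))) = real_of_int (L i) * ln \<alpha>"
      using assms by (simp add: ln_powr)
    ultimately show "- ln (p_exp (S i) (b * \<alpha> powr (real_of_int (L i))))
      = - ln b - real_of_int (L i) * ln \<alpha> + b * (\<alpha> powr real_of_int (L i) * S i)"
      by (simp add: algebra_simps)
  qed
  have "score_exp n L S \<alpha> b \<gamma> = (\<Sum>i=1..n. (- (real_of_int (L i) * ln \<alpha>) + pen n \<gamma> (lev L (i - 1)) (lev L i))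
      + (- ln b) + b * (\<alpha> powr real_of_int (L i) * S i))"
    unfolding score_exp_def apply (rule sum.cong[OF refl]) apply (subst t) apply (simp add: algebra_simps) done
  also have "\<dots> = (\<Sum>i=1..n. - (real_of_int (L i) * ln \<alpha>) + pen n \<gamma> (lev L (i - 1)) (lev L i))
     + (\<Sum>i=1..n. - ln b) + (\<Sum>i=1..n. b * (\<alpha> powr real_of_int (L i) * S i))"
    by (simp only: sum.distrib)
  also have "\<dots> = (\<Sum>i=1..n. - (real_of_int (L i) * ln \<alpha>) + pen n \<gamma> (lev L (i - 1)) (lev L i))
     - real n * ln b + b * (\<Sum>i=1..n. \<alpha> powr real_of_int (L i) * S i)"
    by (simp add: sum_distrib_left)
  finally show ?thesis .
qed
theorem lemma8:
  fixes n k :: nat and S :: "nat \<Rightarrow> real" and \<alpha> \<gamma> \<beta> :: real and L :: "nat \<Rightarrow> int"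
  assumes "n \<ge> 1"
    and "\<forall>i\<in>{1..n}. S i > 0"
    and "\<alpha> > 1" and "\<gamma> > 0" and "k \<ge> 1"
    and "optimal_exp n S \<alpha> \<gamma> k L \<beta>"
  shows "1 / (\<alpha> ^ k * ((\<Sum>i=1..n. S i) / real n)) \<le> \<beta>
       \<and> \<beta> \<le> 1 / ((\<Sum>i=1..n. S i) / real n)"
proof -
  define T where "T = (\<Sum>i=1..n. \<alpha> powr real_of_int (L i) * S i)"
  define U where "U = (\<Sum>i=1..n. S i)"
  have lev: "level_seq n k L" and bpos: "\<beta> > 0"
    and opt: "\<And>b. b > 0 \<Longrightarrow> score_exp n L S \<alpha> \<beta> \<gamma> \<le> score_exp n L S \<alpha> b \<gamma>"
    using assms(6) unfolding optimal_exp_def by auto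
  have Ule: "U \<le> T" unfolding U_def T_def
  proof (rule sum_mono)
    fix i assume i: "i \<in> {1..n}"
    have "1 \<le> \<alpha> powr real_of_int (L i)" using assms(3) lev i unfolding level_seq_def
      by (simp add: ge_one_powr_ge_zero)
    moreover have "S i > 0" using assms(2) i by auto
    ultimately show "S i \<le> \<alpha> powr real_of_int (L i) * S i"
      using mult_right_mono[of 1 "\<alpha> powr real_of_int (L i)" "S i"] by simp
  qed
  have Tle: "T \<le> \<alpha> ^ k * U" unfolding U_def T_def sum_distrib_left
  proof (rule sum_mono)
    fix i assume i: "i \<in> {1..n}"
    have "L i \<le> int k" using lev i unfolding level_seq_def by auto
    then have "real_of_int (L i) \<le> real k" by linarith
    then have "\<alpha> powr real_of_int (L i) \<le> \<alpha> powr real k" using assms(3)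
      by (simp add: powr_mono)
    also have "\<dots> = \<alpha> ^ k" using assms(3) by (simp add: powr_realpow)
    finally show "\<alpha> powr real_of_int (L i) * S i \<le> \<alpha> ^ k * S i" using assms(2) i
      by (simp add: mult_right_mono)
  qed
  have Upos: "U > 0" unfolding U_def using assms(1,2)
    by (intro sum_pos) auto
  have Tpos: "T > 0" using Upos Ule by simp
  have npos: "real n > 0" using assms(1) by simp
  define b where "b = real n / T"
  have b: "b > 0" using npos Tpos by (simp add: b_def)
  have "score_exp n L S \<alpha> \<beta> \<gamma> \<le> score_exp n L S \<alpha> b \<gamma>" using opt b .
  then have ineq: "- real n * ln \<beta> + \<beta> * T \<le> - real n * ln b + b * T"
    using score_form[OF bpos, of \<alpha> n L S \<gamma>] score_form[OF b, of \<alpha> n L S \<gamma>] assms(3)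
    unfolding T_def by simp
  define x where "x = \<beta> * T / real n"
  have xpos: "x > 0" using bpos Tpos npos by (simp add: x_def)
  have lnb: "ln \<beta> = ln x + ln b" using bpos Tpos npos b
    unfolding x_def b_def by (simp add: ln_mult ln_div)
  have bT: "b * T = real n" using Tpos by (simp add: b_def)
  have bT2: "\<beta> * T = real n * x" using npos by (simp add: x_def)
  have "real n * (x - 1) \<le> real n * ln x"
    using ineq lnb bT bT2 by (simp add: algebra_simps)
  then have "x - 1 \<le> ln x" using npos by simp
  then have "x = 1" using ln_strict[OF xpos] by fastforce
  then have beq: "\<beta> = real n / T" using npos Tpos by (simp add: x_def field_simps)
  have "1 / (\<alpha> ^ k * (U / real n)) = real n / (\<alpha> ^ k * U)" using npos by simp
  also have "\<dots> \<le> real n / T" using Tle Tpos npos by (simp add: frac_le)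
  finally have 1: "1 / (\<alpha> ^ k * (U / real n)) \<le> \<beta>" using beq by simp
  have "real n / T \<le> real n / U" using Ule Upos npos by (simp add: frac_le)
  then have 2: "\<beta> \<le> 1 / (U / real n)" using beq by simp
  show ?thesis using 1 2 unfolding U_def by simp
qed

end
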